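(* Let $I\subseteq\mathbb{R}$ be an interval with nonempty interior. There is no mean on $I$ of type $\mathcal{T}_1$. Equivalently, there do not exist continuous functions $F\colon I\to\mathbb{R}$ and $G\colon \omega F(I)\to I$ such that $\mathscr{L}_{F,G}$ is a mean on $I$.
   Context: A mean on an interval $I$ is a function $\mathscr{M}\colon\bigcup_{n=1}^\infty I^n\to I$ with $\min(a)\le\mathscr{M}(a)\le\max(a)$ for every $a\in\bigcup_{n\ge1}I^n$. For a commutative semigroup $(Y,+)$ and $F\colon I\to Y$, let $\omega F(I):=\bigcup_{n=1}^\infty\{F(x_1)+\cdots+F(x_n): x_1,\dots,x_n\in I\}$. For $G\colon\omega F(I)\to I$ define $\mathscr{L}_{F,G}\colon\bigcup_{n\ge1}I^n\to I$ by $\mathscr{L}_{F,G}(a_1,\dots,a_n):=G(F(a_1)+\cdots+F(a_n))$. A mean $\mathscr{M}$ on $I$ is of type $\mathcal{T}_k$ ($k\in\mathbb{N}$) if $\mathscr{M}=\mathscr{L}_{F,G}$ for some continuous $F\colon I\to(\mathbb{R}^k,+)$ and some continuous $G\colon\omega F(I)\to I$ ($\omega F(I)$ carrying the subspace topology). *)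

theory Defs
  imports "HOL-Analysis.Analysis"
begin

text \<open>Finite tuples \<open>(a_1,...,a_n)\<close>, n \<ge> 1, are represented by nonempty lists.\<close>

definition is_mean_on :: "real set \<Rightarrow> (real list \<Rightarrow> real) \<Rightarrow> bool" where
  "is_mean_on I M \<longleftrightarrow>
     (\<forall>a. a \<noteq> [] \<and> set a \<subseteq> I \<longrightarrow>
        M a \<in> I \<and> Min (set a) \<le> M a \<and> M a \<le> Max (set a))"

definition omegaF :: "('a \<Rightarrow> 'b::comm_monoid_add) \<Rightarrow> 'a set \<Rightarrow> 'b set" where
  "omegaF F I = {sum_list (map F xs) | xs. xs \<noteq> [] \<and> set xs \<subseteq> I}"

definition L_FG :: "('a \<Rightarrow> 'b::comm_monoid_add) \<Rightarrow> ('b \<Rightarrow> 'c) \<Rightarrow> 'a list \<Rightarrow> 'c" where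
  "L_FG F G a = G (sum_list (map F a))"

end

theory Submission
  imports Defs
begin

lemma mean_rep:
  assumes "is_mean_on I M" "x \<in> I" "n \<ge> 1"
  shows "M (replicate n x) = x"
proof -
  have "replicate n x \<noteq> []" "set (replicate n x) \<subseteq> I" using assms by auto
  with assms(1) have "Min (set (replicate n x)) \<le> M (replicate n x) \<and> M (replicate n x) \<le> Max (set (replicate n x))"
    unfolding is_mean_on_def by blast
  moreover have "set (replicate n x) = {x}" using assms by auto
  ultimately show ?thesis by auto
qed

lemma L_rep: "L_FG F G (replicate n x) = G (real n * F x)"
  unfolding L_FG_def by (simp add: sum_list_replicate)

lemma between:
  fixes a b :: real
  assumes "a \<noteq> b"
  obtains t t' n where "t \<in> {a,b}" "t \<noteq> 0" "n \<ge> (1::nat)" "real n * t = real (Suc n) * t'"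
    "min a b \<le> t'" "t' \<le> max a b"
proof -
  define t where "t = (if \<bar>a\<bar> \<ge> \<bar>b\<bar> then a else b)"
  define s where "s = (if \<bar>a\<bar> \<ge> \<bar>b\<bar> then b else a)"
  have ts: "{t,s} = {a,b}" "\<bar>s\<bar> \<le> \<bar>t\<bar>" "t \<noteq> s" using assms unfolding t_def s_def by auto
  have t0: "t \<noteq> 0" using ts by auto
  have d: "\<bar>t - s\<bar> > 0" using ts by auto
  obtain n :: nat where n: "\<bar>t\<bar> / \<bar>t - s\<bar> < real n" using reals_Archimedean2 by blast
  define m where "m = Suc n"
  have m1: "m \<ge> 1" and mn: "\<bar>t\<bar> < real m * \<bar>t - s\<bar>" using n d unfolding m_def
    by (auto simp: field_simps)
  define t' where "t' = real m * t / real (Suc m)"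
  have eq: "real m * t = real (Suc m) * t'" unfolding t'_def by simp
  have diff: "t - t' = t / real (Suc m)" unfolding t'_def by (simp add: field_simps)
  have small: "\<bar>t - t'\<bar> < \<bar>t - s\<bar>" unfolding diff using mn d
    by (auto simp: field_simps abs_divide)
  have sgn: "(0 < t \<longrightarrow> 0 < t' \<and> t' < t) \<and> (t < 0 \<longrightarrow> t < t' \<and> t' < 0)"
    using m1 unfolding t'_def by (auto simp: field_simps mult_pos_pos mult_neg_pos)
  have "min s t \<le> t' \<and> t' \<le> max s t" using sgn small ts(2) t0 by (cases "t > 0"; auto simp: abs_if split: if_splits)
  hence "min a b \<le> t' \<and> t' \<le> max a b" using ts(1) by (auto simp: doubleton_eq_iff)
  thus ?thesis using that[of t m t'] ts t0 m1 eq by auto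
qed

theorem proposition3p1:
  fixes I :: "real set"
  assumes "is_interval I" and "interior I \<noteq> {}"
  shows "\<not> (\<exists>(F :: real \<Rightarrow> real) (G :: real \<Rightarrow> real).
            continuous_on I F \<and> continuous_on (omegaF F I) G \<and>
            G ` omegaF F I \<subseteq> I \<and> is_mean_on I (L_FG F G))"
proof
  assume "\<exists>(F :: real \<Rightarrow> real) (G :: real \<Rightarrow> real).
            continuous_on I F \<and> continuous_on (omegaF F I) G \<and>
            G ` omegaF F I \<subseteq> I \<and> is_mean_on I (L_FG F G)"
  then obtain F G :: "real \<Rightarrow> real" where cF: "continuous_on I F" and M: "is_mean_on I (L_FG F G)"
    by blast
  have key: "G (real n * F x) = x" if "x \<in> I" "n \<ge> 1" for x n
    using mean_rep[OF M that] L_rep by metis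
  obtain c where "c \<in> interior I" using assms(2) by blast
  then obtain e where e: "e > 0" "ball c e \<subseteq> I" using open_contains_ball interior_subset
    by (metis open_interior subset_trans)
  have x1: "c \<in> I" and x2: "c + e/2 \<in> I" using e by (auto simp: dist_real_def)
  have "F c \<noteq> F (c + e/2)"
  proof
    assume "F c = F (c + e/2)"
    hence "G (real 1 * F c) = G (real 1 * F (c + e/2))" by simp
    thus False using key[OF x1, of 1] key[OF x2, of 1] e by simp
  qed
  then obtain t t' n where tt: "t \<in> {F c, F (c + e/2)}" "t \<noteq> 0" "n \<ge> (1::nat)"
    "real n * t = real (Suc n) * t'" "min (F c) (F (c + e/2)) \<le> t'" "t' \<le> max (F c) (F (c + e/2))"
    by (rule between)
  have conn: "is_interval (F ` I)"
    using connected_continuous_image[OF cF] assms(1) is_interval_connected is_interval_connected_1 by blast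
  have "t' \<in> F ` I"
    using tt(5,6) conn x1 x2 unfolding is_interval_1
    by (cases "F c \<le> F (c + e/2)") (auto simp: min_def max_def)
  then obtain y where y: "y \<in> I" "t' = F y" by blast
  obtain x where x: "x \<in> I" "t = F x" using tt(1) x1 x2 by auto
  have "x = y" using key[OF x(1) tt(3)] key[OF y(1), of "Suc n"] tt(4) x y by simp
  hence "t = t'" using x y by simp
  thus False using tt(2,4) by (simp add: algebra_simps)
qed

end
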